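(* For every positive integer $n$, $$\Phi(n)=\begin{cases} 2n\prod_{p\mid n}\left(1-\frac{\beta(p)}{p}\right), & \text{if } 4\mid n;\\ n\prod_{p\mid n}\left(1-\frac{\beta(p)}{p}\right), & \text{otherwise},\end{cases}$$ where the products run over the primes $p$ dividing $n$.
   Context: For a positive integer $n$, let $\mathcal{G}_n=\{a+bi\in\mathbb{Z}[i]/n\mathbb{Z}[i] : a^2+b^2\equiv 1 \pmod n\}$ and $\Phi(n)=|\mathcal{G}_n|$. For an odd prime $p$, $\beta(p)=\left(\frac{-1}{p}\right)$ is the Legendre symbol, and $\beta(2)=0$. *)

theory Defs
  imports "HOL-Number_Theory.Number_Theory"
begin

text \<open>Elements a+bi of Z[i]/nZ[i] are represented by pairs of residues (a,b) in {0..<n}^2.\<close>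
definition G :: "nat \<Rightarrow> (nat \<times> nat) set" where
  "G n = {(a, b). a < n \<and> b < n \<and> [a^2 + b^2 = 1] (mod n)}"

definition Phi :: "nat \<Rightarrow> nat" where
  "Phi n = card (G n)"

definition beta :: "nat \<Rightarrow> int" where
  "beta p = (if p = 2 then 0 else Legendre (-1) (int p))"

end

theory Submission
  imports Defs
begin

definition S :: "int \<Rightarrow> (int \<times> int) set" where
  "S m = {(a,b). 0 \<le> a \<and> a < m \<and> 0 \<le> b \<and> b < m \<and> [a^2+b^2 = 1] (mod m)}"

lemma finite_S: "finite (S m)"
  by (rule finite_subset[of _ "{0..<m}\<times>{0..<m}"]) (auto simp: S_def)

lemma Phi_S: "Phi n = card (S (int n))"
proof -
  have "S (int n) = (\<lambda>(a,b). (int a, int b)) ` G n"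
  proof (intro equalityI subsetI)
    fix x assume "x \<in> S (int n)"
    then obtain a b where x: "x = (a,b)" "0 \<le> a" "a < int n" "0 \<le> b" "b < int n"
      "[a^2+b^2 = 1] (mod int n)" by (auto simp: S_def)
    have "[int (nat a ^ 2 + nat b ^ 2) = int 1] (mod int n)" using x by simp
    then have "(nat a, nat b) \<in> G n" using x unfolding G_def cong_int_iff by auto
    then show "x \<in> (\<lambda>(a,b). (int a, int b)) ` G n" using x
      by (auto intro!: image_eqI[where x="(nat a, nat b)"])
  next
    fix x assume "x \<in> (\<lambda>(a,b). (int a, int b)) ` G n"
    then obtain a b where x: "x = (int a, int b)" "(a,b) \<in> G n" by auto
    then have "[int (a ^ 2 + b ^ 2) = int 1] (mod int n)" unfolding cong_int_iff G_def by auto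
    then show "x \<in> S (int n)" using x by (auto simp: S_def G_def)
  qed
  moreover have "inj_on (\<lambda>(a,b). (int a, int b)) (G n)" by (auto simp: inj_on_def)
  ultimately show ?thesis unfolding Phi_def by (simp add: card_image)
qed

lemma S_mult:
  fixes m n :: int
  assumes m: "m > 0" and n: "n > 0" and cop: "coprime m n"
  shows "card (S (m*n)) = card (S m) * card (S n)"
proof -
  define h where "h = (\<lambda>(a::int,b::int). ((a mod m, b mod m), (a mod n, b mod n)))"
  have red: "(a mod k, b mod k) \<in> S k" if "[a^2+b^2 = 1] (mod k)" "k > 0" for a b k :: int
  proof -
    have "[(a mod k)^2 + (b mod k)^2 = a^2+b^2] (mod k)"
      by (intro cong_add cong_pow) (simp_all add: cong_def)
    then have "[(a mod k)^2 + (b mod k)^2 = 1] (mod k)" using that(1) by (rule cong_trans)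
    then show ?thesis using that by (auto simp: S_def)
  qed
  have "bij_betw h (S (m*n)) (S m \<times> S n)"
  proof (rule bij_betw_imageI)
    show "inj_on h (S (m*n))"
    proof (rule inj_onI)
      fix x y assume x: "x \<in> S (m*n)" and y: "y \<in> S (m*n)" and e: "h x = h y"
      obtain a b where ab: "x = (a,b)" by force
      obtain c d where cd: "y = (c,d)" by force
      have "[a = c] (mod m)" "[a = c] (mod n)" "[b = d] (mod m)" "[b = d] (mod n)"
        using e by (auto simp: h_def ab cd cong_def)
      then have "[a = c] (mod m*n)" "[b = d] (mod m*n)"
        using cop by (auto intro: coprime_cong_mult)
      then show "x = y" using x y ab cd by (auto simp: S_def cong_def)
    qed
    show "h ` S (m*n) = S m \<times> S n"
    proof (intro equalityI subsetI)
      fix y assume "y \<in> h ` S (m*n)"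
      then obtain a b where ab: "(a,b) \<in> S (m*n)" "y = h (a,b)" by auto
      have c: "[a^2+b^2 = 1] (mod m*n)" using ab by (auto simp: S_def)
      have "[a^2+b^2 = 1] (mod m)" "[a^2+b^2 = 1] (mod n)"
        using c cong_modulus_mult[of _ _ m n] cong_modulus_mult[of _ _ n m] by (auto simp: mult.commute)
      then show "y \<in> S m \<times> S n" using ab m n red by (auto simp: h_def)
    next
      fix y assume "y \<in> S m \<times> S n"
      then obtain a1 b1 a2 b2 where y: "y = ((a1,b1),(a2,b2))" "(a1,b1) \<in> S m" "(a2,b2) \<in> S n"
        by auto
      obtain x where x: "[x = a1] (mod m)" "[x = a2] (mod n)"
        using binary_chinese_remainder_int[OF cop] by blast
      obtain z where z: "[z = b1] (mod m)" "[z = b2] (mod n)"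
        using binary_chinese_remainder_int[OF cop] by blast
      define a where "a = x mod (m*n)"
      define b where "b = z mod (m*n)"
      have am: "[a = a1] (mod m)" "[a = a2] (mod n)" "[b = b1] (mod m)" "[b = b2] (mod n)"
        using x z unfolding a_def b_def cong_def
        by (simp_all add: mod_mod_cancel)
      have "[a^2+b^2 = a1^2+b1^2] (mod m)" "[a^2+b^2 = a2^2+b2^2] (mod n)"
        using am by (auto intro!: cong_add cong_pow)
      then have "[a^2+b^2 = 1] (mod m)" "[a^2+b^2 = 1] (mod n)"
        using y by (auto simp: S_def elim: cong_trans)
      then have "[a^2+b^2 = 1] (mod m*n)" using cop by (rule coprime_cong_mult)
      then have "(a,b) \<in> S (m*n)" using m n by (auto simp: S_def a_def b_def)
      moreover have "h (a,b) = y" using am y m n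
        by (auto simp: h_def S_def cong_def)
      ultimately show "y \<in> h ` S (m*n)" by force
    qed
  qed
  then show ?thesis by (simp add: bij_betw_same_card card_cartesian_product)
qed


lemma card_fibers:
  assumes "finite A" "finite B" "f ` A \<subseteq> B"
  shows "card A = (\<Sum>b\<in>B. card {a\<in>A. f a = b})"
proof -
  have "A = (\<Union>b\<in>B. {a\<in>A. f a = b})" using assms(3) by auto
  then have "card A = card (\<Union>b\<in>B. {a\<in>A. f a = b})" by simp
  also have "\<dots> = (\<Sum>b\<in>B. card {a\<in>A. f a = b})"
    using assms(1,2) by (intro card_UN_disjoint) auto
  finally show ?thesis .
qed

lemma key_expand:
  fixes a0 b0 s t M c :: int
  assumes "a0^2+b0^2-1 = M*c"
  shows "(a0+s*M)^2 + (b0+t*M)^2 - 1 = M*(c + 2*(s*a0+t*b0) + M*(s^2+t^2))"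
proof -
  have "(a0+s*M)^2 + (b0+t*M)^2 - 1 = (a0^2+b0^2-1) + M*(2*(s*a0+t*b0) + M*(s^2+t^2))"
    by (simp add: power2_eq_square algebra_simps)
  also have "\<dots> = M*c + M*(2*(s*a0+t*b0) + M*(s^2+t^2))" using assms by simp
  finally show ?thesis by (simp add: power2_eq_square algebra_simps)
qed

lemma key_cond:
  fixes a0 b0 s t M c p :: int
  assumes "a0^2+b0^2-1 = M*c" "p dvd M" "M \<noteq> 0"
  shows "[(a0+s*M)^2 + (b0+t*M)^2 = 1] (mod p*M) \<longleftrightarrow> p dvd (c + 2*(s*a0+t*b0))"
proof -
  have "[(a0+s*M)^2 + (b0+t*M)^2 = 1] (mod p*M) \<longleftrightarrow>
        M*p dvd M*(c + 2*(s*a0+t*b0) + M*(s^2+t^2))"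
    unfolding cong_iff_dvd_diff key_expand[OF assms(1)] by (simp add: mult.commute)
  also have "\<dots> \<longleftrightarrow> p dvd (c + 2*(s*a0+t*b0) + M*(s^2+t^2))"
    using assms(3) by simp
  also have "\<dots> \<longleftrightarrow> p dvd (c + 2*(s*a0+t*b0))"
    using assms(2) by (simp add: dvd_add_left_iff)
  finally show ?thesis .
qed

lemma fiber:
  fixes p M a0 b0 :: int
  assumes p: "p > 0" and M: "M > 0" and pM: "p dvd M" and x0: "(a0,b0) \<in> S M"
  defines "c \<equiv> (a0^2+b0^2-1) div M"
  shows "card {x \<in> S (p*M). (fst x mod M, snd x mod M) = (a0,b0)} =
         card {(s,t). 0\<le>s \<and> s<p \<and> 0\<le>t \<and> t<p \<and> p dvd (c + 2*(s*a0+t*b0))}"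
proof -
  let ?T = "{(s,t). 0\<le>s \<and> s<p \<and> 0\<le>t \<and> t<p \<and> p dvd (c + 2*(s*a0+t*b0))}"
  let ?g = "\<lambda>(s,t). (a0+s*M, b0+t*M)"
  have x0': "0 \<le> a0" "a0 < M" "0 \<le> b0" "b0 < M" "[a0^2+b0^2 = 1] (mod M)"
    using x0 by (auto simp: S_def)
  have "M dvd (a0^2+b0^2-1)" using x0'(5) by (simp add: cong_iff_dvd_diff)
  then have hc: "a0^2+b0^2-1 = M*c" unfolding c_def by simp
  have bnd: "0 \<le> a0 + s*M \<and> a0 + s*M < p*M" if "0 \<le> s" "s < p" "0 \<le> a0" "a0 < M" for s a0
  proof -
    have "s*M \<le> (p-1)*M" using that M by (intro mult_right_mono) auto
    then show ?thesis using that M by (auto simp: algebra_simps)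
  qed
  have "{x \<in> S (p*M). (fst x mod M, snd x mod M) = (a0,b0)} = ?g ` ?T"
  proof (intro equalityI subsetI)
    fix x assume x: "x \<in> {x \<in> S (p*M). (fst x mod M, snd x mod M) = (a0,b0)}"
    then obtain a b where ab: "x = (a,b)" "0 \<le> a" "a < p*M" "0 \<le> b" "b < p*M"
       "[a^2+b^2 = 1] (mod p*M)" "a mod M = a0" "b mod M = b0"
      by (auto simp: S_def)
    define s where "s = a div M"
    define t where "t = b div M"
    have as: "a = a0 + s*M" "b = b0 + t*M" using ab unfolding s_def t_def
      by (metis add.commute div_mult_mod_eq)+
    have "s*M < p*M" using as ab x0' by linarith
    moreover have "t*M < p*M" using as ab x0' by linarith
    ultimately have "s < p" "t < p" using M by (meson mult_less_cancel_right_pos)+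
    moreover have "0 \<le> s" "0 \<le> t" using ab M unfolding s_def t_def
      by (simp_all add: pos_imp_zdiv_nonneg_iff)
    moreover have "p dvd (c + 2*(s*a0+t*b0))"
      using ab(6) key_cond[OF hc pM] M unfolding as by simp
    ultimately show "x \<in> ?g ` ?T" using ab as by (auto intro!: image_eqI[where x="(s,t)"])
  next
    fix x assume "x \<in> ?g ` ?T"
    then obtain s t where st: "x = (a0+s*M, b0+t*M)" "0\<le>s" "s<p" "0\<le>t" "t<p"
       "p dvd (c + 2*(s*a0+t*b0))" by auto
    have "[(a0+s*M)^2 + (b0+t*M)^2 = 1] (mod p*M)"
      using st(6) key_cond[OF hc pM] M by simp
    moreover have "(a0+s*M) mod M = a0" "(b0+t*M) mod M = b0" using x0' by simp_all
    ultimately show "x \<in> {x \<in> S (p*M). (fst x mod M, snd x mod M) = (a0,b0)}"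
      using st bnd x0' by (auto simp: S_def)
  qed
  moreover have "inj_on ?g ?T" using M by (auto simp: inj_on_def)
  ultimately show ?thesis by (simp add: card_image)
qed

lemma lin_count:
  fixes p c f g :: int
  assumes p: "p > 0" and cop: "coprime g p"
  shows "card {(s,t). 0\<le>s \<and> s<p \<and> 0\<le>t \<and> t<p \<and> p dvd (c + f*s + g*t)} = nat p"
proof -
  obtain v where v: "[g*v = 1] (mod p)" using cong_solve_coprime_int[OF cop] by blast
  have pv: "p dvd (g*v - 1)" using v by (simp add: cong_iff_dvd_diff)
  let ?h = "\<lambda>s. (s, ((-c - f*s)*v) mod p)"
  have "{(s,t). 0\<le>s \<and> s<p \<and> 0\<le>t \<and> t<p \<and> p dvd (c + f*s + g*t)} = ?h ` {0..<p}"
  proof (intro equalityI subsetI)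
    fix x assume "x \<in> {(s,t). 0\<le>s \<and> s<p \<and> 0\<le>t \<and> t<p \<and> p dvd (c + f*s + g*t)}"
    then obtain s t where st: "x = (s,t)" "0\<le>s" "s<p" "0\<le>t" "t<p" "p dvd (c + f*s + g*t)"
      by auto
    have e: "t - (-c-f*s)*v = v*(c + f*s + g*t) - t*(g*v - 1)" by (simp add: power2_eq_square algebra_simps)
    have "p dvd (t - (-c-f*s)*v)" unfolding e using st(6) pv by simp
    then have "[t = (-c-f*s)*v] (mod p)" by (simp add: cong_iff_dvd_diff)
    then have "t mod p = ((-c-f*s)*v) mod p" by (simp add: cong_def)
    then have "t = ((-c-f*s)*v) mod p" using st by simp
    then show "x \<in> ?h ` {0..<p}" using st by auto
  next
    fix x assume "x \<in> ?h ` {0..<p}"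
    then obtain s where s: "x = ?h s" "0 \<le> s" "s < p" by auto
    define t where "t = ((-c - f*s)*v) mod p"
    have d: "p dvd ((-c - f*s)*v - t)" unfolding t_def by (rule dvd_minus_mod)
    have e: "c + f*s + g*t = (c+f*s)*(1 - g*v) - g*((-c - f*s)*v - t)" by (simp add: power2_eq_square algebra_simps)
    have "p dvd (c + f*s + g*t)" unfolding e using d pv
      by (metis dvd_diff dvd_mult dvd_mult2 minus_diff_eq dvd_minus_iff)
    then show "x \<in> {(s,t). 0\<le>s \<and> s<p \<and> 0\<le>t \<and> t<p \<and> p dvd (c + f*s + g*t)}"
      using s p by (auto simp: t_def)
  qed
  moreover have "inj_on ?h {0..<p}" by (auto simp: inj_on_def)
  ultimately show ?thesis by (simp add: card_image)
qed

lemma lin_count':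
  fixes p c f g :: int
  assumes p: "p > 0" and cop: "coprime f p"
  shows "card {(s,t). 0\<le>s \<and> s<p \<and> 0\<le>t \<and> t<p \<and> p dvd (c + f*s + g*t)} = nat p"
proof -
  have "{(s,t). 0\<le>s \<and> s<p \<and> 0\<le>t \<and> t<p \<and> p dvd (c + f*s + g*t)} =
        (\<lambda>(s,t). (t,s)) ` {(s,t). 0\<le>s \<and> s<p \<and> 0\<le>t \<and> t<p \<and> p dvd (c + g*s + f*t)}"
    by (auto simp: image_iff add_ac)
  moreover have "inj_on (\<lambda>(s::int,t::int). (t,s)) A" for A by (auto simp: inj_on_def)
  ultimately show ?thesis using lin_count[OF p cop, of c g] by (simp add: card_image)
qed

lemma red_S:
  fixes a b p M :: int
  assumes "(a,b) \<in> S (p*M)" "M > 0"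
  shows "(a mod M, b mod M) \<in> S M"
proof -
  have "[a^2+b^2 = 1] (mod M*p)" using assms by (auto simp: S_def mult.commute)
  then have c: "[a^2+b^2 = 1] (mod M)" by (rule cong_modulus_mult)
  have "[(a mod M)^2 + (b mod M)^2 = a^2+b^2] (mod M)"
    by (intro cong_add cong_pow) (simp_all add: cong_def)
  then have "[(a mod M)^2 + (b mod M)^2 = 1] (mod M)" using c by (rule cong_trans)
  then show ?thesis using assms by (auto simp: S_def)
qed

lemma lift_general:
  fixes p M :: int
  assumes p: "p > 0" and M: "M > 0" and pM: "p dvd M"
  shows "card (S (p*M)) = (\<Sum>x\<in>S M. card {(s,t). 0\<le>s \<and> s<p \<and> 0\<le>t \<and> t<p \<and>
            p dvd ((fst x^2+snd x^2-1) div M + 2*(s*fst x+t*snd x))})"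
proof -
  let ?r = "\<lambda>x::int\<times>int. (fst x mod M, snd x mod M)"
  have "?r ` S (p*M) \<subseteq> S M" using red_S M by auto
  then have "card (S (p*M)) = (\<Sum>x\<in>S M. card {y\<in>S (p*M). ?r y = x})"
    by (intro card_fibers finite_S)
  also have "\<dots> = (\<Sum>x\<in>S M. card {(s,t). 0\<le>s \<and> s<p \<and> 0\<le>t \<and> t<p \<and>
            p dvd ((fst x^2+snd x^2-1) div M + 2*(s*fst x+t*snd x))})"
  proof (rule sum.cong[OF refl])
    fix x assume x: "x \<in> S M"
    obtain a0 b0 where "x = (a0,b0)" by force
    then show "card {y\<in>S (p*M). ?r y = x} = card {(s,t). 0\<le>s \<and> s<p \<and> 0\<le>t \<and> t<p \<and>
            p dvd ((fst x^2+snd x^2-1) div M + 2*(s*fst x+t*snd x))}"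
      using fiber[OF p M pM, of a0 b0] x by simp
  qed
  finally show ?thesis .
qed

lemma lift_odd:
  fixes p :: int and k :: nat
  assumes pr: "prime p" and p2: "p \<noteq> 2" and k: "k \<ge> 1"
  shows "card (S (p^Suc k)) = nat p * card (S (p^k))"
proof -
  define M where "M = p^k"
  have p: "p > 0" using pr by (simp add: prime_gt_0_int)
  have M: "M > 0" using p by (simp add: M_def)
  have pM: "p dvd M" using k by (simp add: M_def dvd_power)
  have "card (S (p^Suc k)) = card (S (p*M))" by (simp add: M_def)
  also have "\<dots> = (\<Sum>x\<in>S M. nat p)"
    unfolding lift_general[OF p M pM]
  proof (rule sum.cong[OF refl])
    fix x assume x: "x \<in> S M"
    obtain a0 b0 where ab: "x = (a0,b0)" by force
    define c where "c = (a0^2+b0^2-1) div M"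
    have "M dvd (a0^2+b0^2-1)" using x ab by (simp add: S_def cong_iff_dvd_diff)
    then have "p dvd (a0^2+b0^2-1)" using pM by (rule dvd_trans[rotated])
    have p2': "\<not> p dvd 2"
    proof
      assume "p dvd 2"
      then have "p \<le> 2" by (simp add: zdvd_imp_le)
      moreover have "p \<ge> 2" using pr by (simp add: prime_ge_2_int)
      ultimately show False using p2 by simp
    qed
    have "\<not> p dvd a0 \<or> \<not> p dvd b0"
    proof (rule ccontr)
      assume "\<not> ?thesis"
      then have "p dvd a0" "p dvd b0" by auto
      then have "p dvd a0*a0+b0*b0" by (intro dvd_add dvd_mult2)
      then have "p dvd a0^2+b0^2" by (simp add: power2_eq_square)
      then have "p dvd (a0^2+b0^2) - (a0^2+b0^2-1)" using \<open>p dvd (a0^2+b0^2-1)\<close>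
        by (rule dvd_diff)
      then have "p dvd 1" by simp
      then have "p \<le> 1" by (simp add: zdvd_imp_le)
      then show False using prime_ge_2_int[OF pr] by simp
    qed
    have eq: "{(s,t). 0\<le>s \<and> s<p \<and> 0\<le>t \<and> t<p \<and> p dvd (c + 2*(s*a0+t*b0))} =
          {(s,t). 0\<le>s \<and> s<p \<and> 0\<le>t \<and> t<p \<and> p dvd (c + (2*a0)*s + (2*b0)*t)}"
      by (simp add: algebra_simps)
    have "card {(s,t). 0\<le>s \<and> s<p \<and> 0\<le>t \<and> t<p \<and> p dvd (c + (2*a0)*s + (2*b0)*t)} = nat p"
    proof (cases "p dvd a0")
      case True
      then have "\<not> p dvd 2*b0" using \<open>\<not> p dvd a0 \<or> \<not> p dvd b0\<close> p2' pr
        by (simp add: prime_dvd_mult_iff)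
      then have "coprime (2*b0) p" using prime_imp_coprime[OF pr] coprime_commute by blast
      then show ?thesis by (rule lin_count[OF p])
    next
      case False
      then have "\<not> p dvd 2*a0" using p2' pr by (simp add: prime_dvd_mult_iff)
      then have "coprime (2*a0) p" using prime_imp_coprime[OF pr] coprime_commute by blast
      then show ?thesis by (rule lin_count'[OF p])
    qed
    then show "card {(s,t). 0\<le>s \<and> s<p \<and> 0\<le>t \<and> t<p \<and>
            p dvd ((fst x^2+snd x^2-1) div M + 2*(s*fst x+t*snd x))} = nat p"
      using eq ab by (simp add: c_def)
  qed
  also have "\<dots> = nat p * card (S (p^k))" by (simp add: M_def)
  finally show ?thesis .
qed

lemma lift_2:
  fixes M :: int
  assumes M: "M > 0" and pM: "2 dvd M"
  shows "card (S (2*M)) = 4 * card {x\<in>S M. 2*M dvd (fst x^2+snd x^2-1)}"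
proof -
  have "card (S (2*M)) = (\<Sum>x\<in>S M. card {(s,t). 0\<le>s \<and> s<(2::int) \<and> 0\<le>t \<and> t<2 \<and>
            2 dvd ((fst x^2+snd x^2-1) div M + 2*(s*fst x+t*snd x))})"
    by (rule lift_general) (use M pM in auto)
  also have "\<dots> = (\<Sum>x\<in>S M. if 2*M dvd (fst x^2+snd x^2-1) then 4 else 0)"
  proof (rule sum.cong[OF refl])
    fix x assume x: "x \<in> S M"
    define c where "c = (fst x^2+snd x^2-1) div M"
    have "M dvd (fst x^2+snd x^2-1)" using x by (auto simp: S_def cong_iff_dvd_diff)
    then have hc: "fst x^2+snd x^2-1 = M*c" by (simp add: c_def)
    have "(2 dvd c) = (M*2 dvd M*c)" using M by simp
    then have cc: "(2 dvd c) = (2*M dvd (fst x^2+snd x^2-1))" by (simp add: hc mult.commute)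
    have st: "{(s,t). 0\<le>s \<and> s<(2::int) \<and> 0\<le>t \<and> t<2 \<and> 2 dvd (c + 2*(s*fst x+t*snd x))}
        = (if 2 dvd c then {0..<2}\<times>{0..<2} else {})"
    proof -
      have i: "2 dvd (c + 2*X) \<longleftrightarrow> 2 dvd c" for X :: int by (rule dvd_add_left_iff) simp
      show ?thesis by (cases "2 dvd c") (auto simp only: i, auto)
    qed
    show "card {(s,t). 0\<le>s \<and> s<(2::int) \<and> 0\<le>t \<and> t<2 \<and>
            2 dvd ((fst x^2+snd x^2-1) div M + 2*(s*fst x+t*snd x))} =
          (if 2*M dvd (fst x^2+snd x^2-1) then 4 else 0)"
      using st cc unfolding c_def by simp
  qed
  also have "\<dots> = (\<Sum>x\<in>{x\<in>S M. 2*M dvd (fst x^2+snd x^2-1)}. 4)"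
    by (rule sum.inter_filter[symmetric]) (rule finite_S)
  also have "\<dots> = 4 * card {x\<in>S M. 2*M dvd (fst x^2+snd x^2-1)}" by simp
  finally show ?thesis .
qed


definition sh :: "int \<Rightarrow> int \<Rightarrow> int" where
  "sh H x = (if x < H then x + H else x - H)"

lemma sh_props:
  fixes H x :: int
  assumes H: "H > 0" "even H" and x: "odd x" "0 \<le> x" "x < 2*H"
  shows "0 \<le> sh H x \<and> sh H x < 2*H \<and> odd (sh H x) \<and> sh H (sh H x) = x \<and>
         4*H dvd ((sh H x)^2 - x^2 - 2*H - H^2)"
proof (cases "x < H")
  case True
  obtain j where j: "x = 2*j+1" using x(1) by (metis oddE)
  have e: "(x+H)^2 - x^2 - 2*H - H^2 = 4*H*j" unfolding j by (simp add: power2_eq_square algebra_simps)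
  show ?thesis using True H x by (simp add: sh_def e)
next
  case False
  obtain j where j: "x = 2*j+1" using x(1) by (metis oddE)
  have e: "(x-H)^2 - x^2 - 2*H - H^2 = 4*H*(-j-1)" unfolding j by (simp add: power2_eq_square algebra_simps)
  show ?thesis using False H x by (simp add: sh_def e)
qed

lemma toggle:
  fixes D Q Q' c :: int
  assumes D: "D \<noteq> 0" and Q: "Q = D*c" and d: "2*D dvd Q' - Q - D"
  shows "D dvd Q' \<and> (2*D dvd Q' \<longleftrightarrow> \<not> 2*D dvd Q)"
proof -
  obtain j where j: "Q' - Q - D = 2*D*j" using d by (auto elim: dvdE)
  have Q': "Q' = D*(c + 1 + 2*j)" using j Q by (simp add: algebra_simps)
  have "2*D dvd Q' \<longleftrightarrow> 2 dvd (c + 1 + 2*j)" unfolding Q' using D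
    by (simp add: mult.commute[of 2 D])
  moreover have "2*D dvd Q \<longleftrightarrow> 2 dvd c" unfolding Q using D
    by (simp add: mult.commute[of 2 D])
  ultimately show ?thesis using Q' by auto
qed

definition sigma :: "int \<Rightarrow> int \<times> int \<Rightarrow> int \<times> int" where
  "sigma H x = (if odd (fst x) then (sh H (fst x), snd x) else (fst x, sh H (snd x)))"

lemma sigma_props:
  fixes H :: int
  assumes H: "H > 0" "even H" "4*H dvd H^2" and x: "x \<in> S (2*H)"
  shows "sigma H x \<in> S (2*H) \<and> sigma H (sigma H x) = x \<and>
     (4*H dvd (fst (sigma H x)^2 + snd (sigma H x)^2 - 1) \<longleftrightarrow> \<not> 4*H dvd (fst x^2 + snd x^2 - 1))"
proof -
  obtain a b where ab: "x = (a,b)" by force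
  have r: "0 \<le> a" "a < 2*H" "0 \<le> b" "b < 2*H" and c: "2*H dvd a^2+b^2-1"
    using x ab by (auto simp: S_def cong_iff_dvd_diff)
  define c where "c = (a^2+b^2-1) div (2*H)"
  have Qc: "a^2+b^2-1 = (2*H)*c" using c by (simp add: c_def)
  have "odd a \<or> odd b"
  proof (rule ccontr)
    assume "\<not> ?thesis"
    then have "even (a^2+b^2)" by simp
    moreover have "even (a^2+b^2-1)" using c by (rule dvd_trans[rotated]) simp
    ultimately show False by simp
  qed
  have H4: "4*H dvd H^2" using H by simp
  show ?thesis
  proof (cases "odd a")
    case True
    note s = sh_props[OF H(1,2) True r(1,2)]
    have "4*H dvd ((sh H a)^2 - a^2 - 2*H - H^2) + H^2" using s H4 by (intro dvd_add) auto
    then have d: "2*(2*H) dvd ((sh H a)^2 + b^2 - 1) - (a^2+b^2-1) - 2*H"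
      by (simp add: algebra_simps)
    note t = toggle[OF _ Qc d]
    show ?thesis using t s True H r ab
      by (auto simp: sigma_def S_def cong_iff_dvd_diff)
  next
    case False
    then have ob: "odd b" using \<open>odd a \<or> odd b\<close> by simp
    note s = sh_props[OF H(1,2) ob r(3,4)]
    have "4*H dvd ((sh H b)^2 - b^2 - 2*H - H^2) + H^2" using s H4 by (intro dvd_add) auto
    then have d: "2*(2*H) dvd (a^2 + (sh H b)^2 - 1) - (a^2+b^2-1) - 2*H"
      by (simp add: algebra_simps)
    note t = toggle[OF _ Qc d]
    show ?thesis using t s False H r ab
      by (auto simp: sigma_def S_def cong_iff_dvd_diff)
  qed
qed

lemma half_good:
  fixes H :: int
  assumes H: "H > 0" "even H" "4*H dvd H^2"
  shows "card (S (2*H)) = 2 * card {x\<in>S (2*H). 4*H dvd (fst x^2 + snd x^2 - 1)}"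
proof -
  let ?G = "{x\<in>S (2*H). 4*H dvd (fst x^2 + snd x^2 - 1)}"
  let ?B = "{x\<in>S (2*H). \<not> 4*H dvd (fst x^2 + snd x^2 - 1)}"
  have un: "S (2*H) = ?G \<union> ?B" by auto
  have fG: "finite ?G" and fB: "finite ?B" using finite_S by auto
  have card: "card (S (2*H)) = card ?G + card ?B"
    by (subst un, rule card_Un_disjoint) (use fG fB in auto)
  note sp = sigma_props[OF H]
  have inj: "inj_on (sigma H) (S (2*H))"
    by (rule inj_onI) (metis sp)
  have "card ?G \<le> card ?B"
    by (rule card_inj_on_le[OF inj_on_subset[OF inj]]) (use sp fB in auto)
  moreover have "card ?B \<le> card ?G"
    by (rule card_inj_on_le[OF inj_on_subset[OF inj]]) (use sp fG in auto)
  ultimately show ?thesis using card by simp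
qed

lemma pow2_step:
  fixes k :: nat
  assumes k: "k \<ge> 3"
  shows "card (S (2^Suc k)) = 2 * card (S (2^k))"
proof -
  define H :: int where "H = 2^(k-1)"
  have k2: "(2::int)^k = 2*H" using k unfolding H_def by (cases k) auto
  have H: "H > 0" "even H" using k by (auto simp: H_def)
  have e1: "(4::int)*H = 2^(k+1)" using k2 by simp
  have e2: "H^2 = (2::int)^(2*(k-1))" by (simp add: H_def power_mult[symmetric] mult.commute)
  have "(2::int)^(k+1) dvd 2^(2*(k-1))" using k by (intro le_imp_power_dvd) auto
  then have H4: "4*H dvd H^2" by (simp only: e1 e2)
  have "card (S (2^Suc k)) = card (S (2*(2*H)))" using k2 by simp
  also have "\<dots> = 4 * card {x\<in>S (2*H). 2*(2*H) dvd (fst x^2 + snd x^2 - 1)}"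
    by (rule lift_2) (use H in auto)
  also have "\<dots> = 2 * card (S (2*H))" using half_good[OF H H4] by simp
  finally show ?thesis using k2 by simp
qed

lemma G_filter: "G n = Set.filter (\<lambda>(a,b). (a^2+b^2) mod n = 1 mod n) ({0..<n}\<times>{0..<n})"
  by (auto simp: G_def cong_def)

lemma Phi8: "Phi 8 = 16" unfolding Phi_def G_filter by code_simp
lemma Phi4: "Phi 4 = 8" unfolding Phi_def G_filter by code_simp
lemma Phi2: "Phi 2 = 2" unfolding Phi_def G_filter by code_simp

lemma pow2_val:
  fixes k :: nat
  assumes "k \<ge> 2"
  shows "Phi (2^k) = 2^(k+1)"
proof -
  have "card (S (2^k)) = 2^(k+1)" using assms
  proof (induction k rule: dec_induct)
    case base
    then show ?case using Phi4 Phi_S[of 4] by simp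
  next
    case (step m)
    show ?case
    proof (cases "m = 2")
      case True
      then show ?thesis using Phi8 Phi_S[of 8] by simp
    next
      case False
      then have "m \<ge> 3" using step by simp
      then show ?thesis using pow2_step[of m] step by simp
    qed
  qed
  then show ?thesis using Phi_S[of "2^k"] by simp
qed


definition minv :: "int \<Rightarrow> int \<Rightarrow> int" where
  "minv p u = (SOME v. p dvd u*v - 1)"

lemma minv:
  fixes p u :: int
  assumes "prime p" "\<not> p dvd u"
  shows "p dvd u * minv p u - 1"
proof -
  have "coprime u p" using prime_imp_coprime[OF assms] coprime_commute by blast
  then obtain v where "[u*v = 1] (mod p)" using cong_solve_coprime_int by blast
  then have "\<exists>v. p dvd u*v - 1" by (auto simp: cong_iff_dvd_diff)
  then show ?thesis unfolding minv_def by (rule someI_ex)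
qed


lemma lc2: fixes d :: int shows "d dvd A1 \<Longrightarrow> d dvd A2 \<Longrightarrow> d dvd a1*A1 + a2*A2"
  by (simp add: dvd_add dvd_mult)
lemma lc3: fixes d :: int shows "d dvd A1 \<Longrightarrow> d dvd A2 \<Longrightarrow> d dvd A3 \<Longrightarrow> d dvd a1*A1 + a2*A2 + a3*A3"
  by (simp add: dvd_add dvd_mult)

context
  fixes p :: int
  assumes pr: "prime p" and p2: "p \<noteq> 2"
begin

lemma p_pos: "p > 0" using pr by (simp add: prime_gt_0_int)

lemma p_n2: "\<not> p dvd 2"
proof
  assume "p dvd 2"
  then have "p \<le> 2" by (simp add: zdvd_imp_le)
  moreover have "p \<ge> 2" using pr by (simp add: prime_ge_2_int)
  ultimately show False using p2 by simp
qed

lemma p_n1: "\<not> p dvd 1"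
  using pr by (meson not_prime_unit)

lemma dvd_cancel_sq:
  assumes "\<not> p dvd a" "p dvd a^2 * z" shows "p dvd z"
  using assms pr by (simp add: prime_dvd_mult_iff prime_dvd_power_iff)

lemma mod_eq_of_dvd:
  assumes "p dvd X - x" "0 \<le> x" "x < p" shows "X mod p = x"
proof -
  have "[X = x] (mod p)" using assms by (simp add: cong_iff_dvd_diff)
  then show ?thesis using assms by (simp add: cong_def)
qed

definition pf :: "int \<Rightarrow> int \<times> int" where
  "pf t = (((1-t^2)*minv p (1+t^2)) mod p, (2*t*minv p (1+t^2)) mod p)"

definition pg :: "int \<times> int \<Rightarrow> int" where
  "pg z = (snd z * minv p (1 + fst z)) mod p"

lemma pf_mem:
  assumes t: "0 \<le> t" "t < p" "\<not> p dvd t^2+1"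
  shows "pf t \<in> S p - {(p-1,0)}" "\<not> p dvd 1 + fst (pf t)"
    "p dvd snd (pf t) - t*(1 + fst (pf t))"
proof -
  define v where "v = minv p (1+t^2)"
  define x where "x = ((1-t^2)*v) mod p"
  define y where "y = (2*t*v) mod p"
  have pfe: "pf t = (x,y)" by (simp add: pf_def x_def y_def v_def)
  have D3: "p dvd (1+t^2)*v - 1" unfolding v_def using t(3) by (intro minv pr) (simp add: add.commute)
  have Dx: "p dvd (1-t^2)*v - x" unfolding x_def by (rule dvd_minus_mod)
  have Dy: "p dvd 2*t*v - y" unfolding y_def by (rule dvd_minus_mod)
  have id: "x^2+y^2-1 = ((1+t^2)*v+1)*((1+t^2)*v-1) + (-((1-t^2)*v + x))*((1-t^2)*v - x) + (-(2*t*v+y))*(2*t*v - y)"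
    by (simp add: algebra_simps power2_eq_square)
  have "p dvd x^2+y^2-1" unfolding id using D3 Dx Dy by (rule lc3)
  moreover have "0 \<le> x" "x < p" "0 \<le> y" "y < p" using p_pos by (simp_all add: x_def y_def)
  ultimately have inS: "(x,y) \<in> S p" by (simp add: S_def cong_iff_dvd_diff)
  have nx: "\<not> p dvd 1 + x"
  proof
    assume "p dvd 1 + x"
    then have "p dvd ((1-t^2)*v - x) + (1 + x)" using Dx by (rule dvd_add[rotated])
    then have A: "p dvd (1-t^2)*v + 1" by simp
    have id2: "2 = (1+t^2)*((1-t^2)*v+1) + (-(1-t^2))*((1+t^2)*v-1)"
      by (simp add: algebra_simps power2_eq_square)
    have "p dvd 2" unfolding id2 using A D3 by (rule lc2)
    then show False using p_n2 by simp
  qed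
  have "x \<noteq> p - 1" using nx by auto
  then show "pf t \<in> S p - {(p-1,0)}" "\<not> p dvd 1 + fst (pf t)" using inS nx pfe by auto
  have id3: "y - t*(1+x) = (-1)*(2*t*v - y) + t*((1-t^2)*v - x) + t*((1+t^2)*v - 1)"
    by (simp add: algebra_simps power2_eq_square)
  have "p dvd y - t*(1+x)" unfolding id3 using Dy Dx D3 by (rule lc3)
  then show "p dvd snd (pf t) - t*(1 + fst (pf t))" using pfe by simp
qed


lemma pg_mem:
  assumes z: "z \<in> S p - {(p-1,0)}"
  shows "0 \<le> pg z" "pg z < p" "\<not> p dvd (pg z)^2+1" "pf (pg z) = z"
proof -
  obtain x y where xy: "z = (x,y)" by force
  have r: "0 \<le> x" "x < p" "0 \<le> y" "y < p" and Q: "p dvd x^2+y^2-1" and ne: "(x,y) \<noteq> (p-1,0)"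
    using z xy by (auto simp: S_def cong_iff_dvd_diff)
  have "x \<noteq> p - 1"
  proof
    assume x: "x = p - 1"
    have "x^2+y^2-1 = y^2 + p*(p-2)" unfolding x by (simp add: algebra_simps power2_eq_square)
    then have "y^2 = (x^2+y^2-1) - p*(p-2)" by simp
    moreover have "p dvd (x^2+y^2-1) - p*(p-2)" using Q by (rule dvd_diff) simp
    ultimately have "p dvd y^2" by (simp only:)
    then have "p dvd y" using pr by (simp add: prime_dvd_power_iff)
    then have "y = 0" using r by (metis zdvd_imp_le not_le antisym_conv1)
    then show False using ne x by simp
  qed
  then have n1x: "\<not> p dvd 1 + x" using r by (auto dest: zdvd_imp_le)
  define w where "w = minv p (1+x)"
  define t where "t = (y*w) mod p"
  have pgz: "pg z = t" by (simp add: pg_def xy t_def w_def)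
  have D2: "p dvd (1+x)*w - 1" unfolding w_def using n1x by (intro minv pr)
  have D1: "p dvd y*w - t" unfolding t_def by (rule dvd_minus_mod)
  define E where "E = (1+x)*t - y"
  have idE: "E = (-(1+x))*(y*w - t) + y*((1+x)*w - 1)" unfolding E_def
    by (simp add: algebra_simps)
  have DE: "p dvd E" unfolding idE using D1 D2 by (rule lc2)
  show "0 \<le> pg z" "pg z < p" using p_pos by (simp_all add: pgz t_def)
  show nt: "\<not> p dvd (pg z)^2+1"
  proof
    assume "p dvd (pg z)^2+1"
    then have T: "p dvd t^2+1" by (simp add: pgz)
    have id: "2*(1+x) = (1+x)^2*(t^2+1) + (-1)*(x^2+y^2-1) + (-((1+x)*t+y))*E"
      unfolding E_def by (simp add: algebra_simps power2_eq_square)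
    have "p dvd 2*(1+x)" unfolding id using T Q DE by (intro lc3 dvd_mult)
    then have "p dvd 2 \<or> p dvd 1+x" by (simp only: prime_dvd_mult_iff[OF pr])
    then show False using n1x p_n2 by blast
  qed
  define v where "v = minv p (1+t^2)"
  have D3: "p dvd (1+t^2)*v - 1" unfolding v_def using nt by (intro minv pr) (simp add: pgz add.commute)
  have idZ1: "(1+x)^2 * ((1-x) - (1+x)*t^2) = (-(1+x))*(x^2+y^2-1) + (-(1+x)*(E+2*y))*E"
    unfolding E_def by (simp add: algebra_simps power2_eq_square)
  have "p dvd (1+x)^2 * ((1-x) - (1+x)*t^2)" unfolding idZ1 using Q DE by (rule lc2)
  then have Z1: "p dvd (1-x) - (1+x)*t^2" by (rule dvd_cancel_sq[OF n1x])
  have idZ2: "(1+x)^2 * (2*t - y*(1+t^2)) = (-y)*(x^2+y^2-1) + (2*(1+x) - 2*y^2 - y*E)*E"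
    unfolding E_def by (simp add: algebra_simps power2_eq_square)
  have "p dvd (1+x)^2 * (2*t - y*(1+t^2))" unfolding idZ2 using Q DE by (rule lc2)
  then have Z2: "p dvd 2*t - y*(1+t^2)" by (rule dvd_cancel_sq[OF n1x])
  have i1: "(1-t^2)*v - x = v*((1-x) - (1+x)*t^2) + x*((1+t^2)*v - 1)"
    by (simp add: algebra_simps)
  have i2: "2*t*v - y = v*(2*t - y*(1+t^2)) + y*((1+t^2)*v - 1)"
    by (simp add: algebra_simps)
  have "((1-t^2)*v) mod p = x" using r by (intro mod_eq_of_dvd) (use Z1 D3 i1 lc2 in auto)
  moreover have "(2*t*v) mod p = y" using r by (intro mod_eq_of_dvd) (use Z2 D3 i2 lc2 in auto)
  ultimately show "pf (pg z) = z" unfolding pgz by (simp add: pf_def v_def xy)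
qed

lemma pg_pf:
  assumes t: "0 \<le> t" "t < p" "\<not> p dvd t^2+1"
  shows "pg (pf t) = t"
proof -
  note m = pf_mem[OF t]
  obtain x y where xy: "pf t = (x,y)" by force
  define w where "w = minv p (1+x)"
  have D2: "p dvd (1+x)*w - 1" unfolding w_def using m xy by (intro minv pr) auto
  have D: "p dvd y - t*(1+x)" using m xy by simp
  have i: "y*w - t = w*(y - t*(1+x)) + t*((1+x)*w - 1)" by (simp add: algebra_simps)
  have "(y*w) mod p = t" using t by (intro mod_eq_of_dvd) (use D D2 i lc2 in auto)
  then show ?thesis by (simp add: pg_def xy w_def)
qed

lemma bij_param:
  "bij_betw pf {t. 0 \<le> t \<and> t < p \<and> \<not> p dvd t^2+1} (S p - {(p-1,0)})"
proof (rule bij_betw_byWitness[where f'=pg])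
  show "\<forall>a\<in>{t. 0 \<le> t \<and> t < p \<and> \<not> p dvd t^2+1}. pg (pf a) = a"
  proof
    fix a assume "a \<in> {t. 0 \<le> t \<and> t < p \<and> \<not> p dvd t^2+1}"
    then show "pg (pf a) = a" by (intro pg_pf) auto
  qed
  show "\<forall>a'\<in>S p - {(p-1,0)}. pf (pg a') = a'"
  proof
    fix a assume "a \<in> S p - {(p-1,0)}"
    then show "pf (pg a) = a" by (rule pg_mem(4))
  qed
  show "pf ` {t. 0 \<le> t \<and> t < p \<and> \<not> p dvd t^2+1} \<subseteq> S p - {(p-1,0)}"
  proof
    fix z assume "z \<in> pf ` {t. 0 \<le> t \<and> t < p \<and> \<not> p dvd t^2+1}"
    then obtain t where "z = pf t" "0 \<le> t" "t < p" "\<not> p dvd t^2+1" by auto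
    then show "z \<in> S p - {(p-1,0)}" using pf_mem(1) by simp
  qed
  show "pg ` (S p - {(p-1,0)}) \<subseteq> {t. 0 \<le> t \<and> t < p \<and> \<not> p dvd t^2+1}"
  proof
    fix z assume "z \<in> pg ` (S p - {(p-1,0)})"
    then obtain a where "z = pg a" "a \<in> S p - {(p-1,0)}" by auto
    then show "z \<in> {t. 0 \<le> t \<and> t < p \<and> \<not> p dvd t^2+1}" using pg_mem(1-3) by simp
  qed
qed


lemma card_R:
  "int (card {t. 0 \<le> t \<and> t < p \<and> p dvd t^2+1}) = 1 + Legendre (-1) p"
proof -
  let ?R = "{t. 0 \<le> t \<and> t < p \<and> p dvd t^2+1}"
  have nz: "\<not> [-1 = 0] (mod p)" using p_n1 by (simp add: cong_iff_dvd_diff)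
  have qr: "QuadRes p (-1) \<longleftrightarrow> (\<exists>y. p dvd y^2+1)"
    by (simp add: QuadRes_def cong_iff_dvd_diff)
  show ?thesis
  proof (cases "QuadRes p (-1)")
    case False
    then have "?R = {}" using qr by auto
    then have "card ?R = 0" by (simp only: card.empty)
    then show ?thesis using False nz by (simp add: Legendre_def)
  next
    case True
    then obtain y0 where y0: "p dvd y0^2+1" using qr by blast
    define t0 where "t0 = y0 mod p"
    have Dt: "p dvd y0 - t0" unfolding t0_def by (rule dvd_minus_mod)
    have i: "t0^2+1 = 1*(y0^2+1) + (-(y0+t0))*(y0 - t0)" by (simp add: algebra_simps power2_eq_square)
    have t0R: "p dvd t0^2+1" unfolding i using y0 Dt by (rule lc2)
    have r0: "0 \<le> t0" "t0 < p" using p_pos by (simp_all add: t0_def)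
    have "t0 \<noteq> 0" using t0R p_n1 by auto
    with r0 have t0p: "0 < t0" by simp
    define t1 where "t1 = p - t0"
    have r1: "0 \<le> t1" "t1 < p" using r0 t0p by (simp_all add: t1_def)
    have i1: "t1^2+1 = 1*(t0^2+1) + (p - 2*t0)*p" by (simp add: t1_def algebra_simps power2_eq_square)
    have t1R: "p dvd t1^2+1" unfolding i1 using t0R by (intro lc2) auto
    have ne: "t0 \<noteq> t1"
    proof
      assume "t0 = t1"
      then have "p = 2*t0" by (simp add: t1_def)
      then have "2 dvd p" by simp
      then have "(2::int) = 1 \<or> (2::int) = p" using pr unfolding prime_int_iff by (metis zero_le_numeral)
      then show False using p2 by simp
    qed
    have "?R = {t0, t1}"
    proof (intro equalityI subsetI)
      fix t assume "t \<in> ?R"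
      then have t: "0 \<le> t" "t < p" "p dvd t^2+1" by auto
      have i2: "(t - t0)*(t + t0) = 1*(t^2+1) + (-1)*(t0^2+1)" by (simp add: algebra_simps power2_eq_square)
      have "p dvd (t - t0)*(t + t0)" unfolding i2 using t(3) t0R by (rule lc2)
      then have "p dvd t - t0 \<or> p dvd t + t0" by (simp only: prime_dvd_mult_iff[OF pr])
      then show "t \<in> {t0, t1}"
      proof
        assume "p dvd t - t0"
        then have "t mod p = t0" using r0 by (rule mod_eq_of_dvd)
        then show ?thesis using t by simp
      next
        assume a: "p dvd t + t0"
        have "t - t1 = 1*(t + t0) + (-1)*p" by (simp add: t1_def)
        then have "p dvd t - t1" using a by (metis lc2 dvd_refl)
        then have "t mod p = t1" using r1 by (rule mod_eq_of_dvd)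
        then show ?thesis using t by simp
      qed
    next
      fix t assume "t \<in> {t0, t1}"
      then show "t \<in> ?R" using r0 r1 t0R t1R by auto
    qed
    then have "card ?R = 2" using ne by simp
    then show ?thesis using True nz by (simp add: Legendre_def)
  qed
qed

lemma card_Sp: "int (card (S p)) = p - Legendre (-1) p"
proof -
  let ?R = "{t. 0 \<le> t \<and> t < p \<and> p dvd t^2+1}"
  let ?T = "{t. 0 \<le> t \<and> t < p \<and> \<not> p dvd t^2+1}"
  have T: "?T = {0..<p} - ?R" by auto
  have "finite ?R" by (rule finite_subset[of _ "{0..<p}"]) auto
  then have cT: "card ?T = card {0..<p} - card ?R" unfolding T by (intro card_Diff_subset) auto
  have "card ?R \<le> card {0..<p}" by (intro card_mono) auto
  then have cT': "int (card ?T) = p - int (card ?R)" using cT p_pos by simp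
  have P0: "(p-1, 0) \<in> S p"
  proof -
    have "(p-1)^2 + 0^2 - 1 = p*(p-2)" by (simp add: algebra_simps power2_eq_square)
    then show ?thesis using p_pos by (simp add: S_def cong_iff_dvd_diff)
  qed
  have "card (S p - {(p-1,0)}) = card ?T"
    using bij_betw_same_card[OF bij_param] by simp
  moreover have "card (S p - {(p-1,0)}) = card (S p) - 1" using P0 finite_S by simp
  moreover have "card (S p) \<ge> 1" using P0 finite_S by (metis card_0_eq empty_iff less_one not_le)
  ultimately have "int (card (S p)) = int (card ?T) + 1" by linarith
  then show ?thesis using cT' card_R by simp
qed

end


lemma odd_pow_S:
  fixes q :: int and e :: nat
  assumes pr: "prime q" and q2: "q \<noteq> 2" and e: "e \<ge> 1"
  shows "card (S (q^e)) = nat q^(e-1) * card (S q)"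
  using e
proof (induction e rule: dec_induct)
  case base then show ?case by simp
next
  case (step m)
  then show ?case using lift_odd[OF pr q2, of m] by (cases m) auto
qed

lemma odd_pow_val:
  fixes p e :: nat
  assumes pr: "prime p" and p2: "p \<noteq> 2" and e: "e \<ge> 1"
  shows "real (Phi (p^e)) = real p ^ e * (1 - real_of_int (beta p) / real p)"
proof -
  have pri: "prime (int p)" using pr by simp
  have p2': "int p \<noteq> 2" using p2 by simp
  have "Phi (p^e) = card (S (int p ^ e))" using Phi_S[of "p^e"] by simp
  also have "\<dots> = p^(e-1) * card (S (int p))" using odd_pow_S[OF pri p2' e] by simp
  finally have A: "int (Phi (p^e)) = int p^(e-1) * (int p - Legendre (-1) (int p))"
    using card_Sp[OF pri p2'] by simp
  have B: "beta p = Legendre (-1) (int p)" using p2 by (simp add: beta_def)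
  have p0: "real p > 0" using pr by (simp add: prime_gt_0_nat)
  have "real (Phi (p^e)) = real p^(e-1) * (real p - real_of_int (Legendre (-1) (int p)))"
    using arg_cong[OF A, of real_of_int] by simp
  also have "\<dots> = real p ^ e * (1 - real_of_int (beta p) / real p)"
  proof -
    have "real p ^ e = real p^(e-1) * real p" using e by (cases e) auto
    then show ?thesis using p0 B by (simp add: field_simps)
  qed
  finally show ?thesis .
qed

lemma Phi_mult:
  fixes m n :: nat
  assumes "m > 0" "n > 0" "coprime m n"
  shows "Phi (m*n) = Phi m * Phi n"
proof -
  have "coprime (int m) (int n)" using assms by simp
  then show ?thesis using S_mult[of "int m" "int n"] assms by (simp add: Phi_S)
qed

lemma Phi_prod:
  fixes P :: "nat set" and e :: "nat \<Rightarrow> nat"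
  assumes "finite P" "\<forall>p\<in>P. prime p"
  shows "Phi (\<Prod>p\<in>P. p^e p) = (\<Prod>p\<in>P. Phi (p^e p))"
  using assms
proof (induction P rule: finite_induct)
  case empty
  then show ?case using Phi2 by (simp add: Phi_def G_def cong_def)
next
  case (insert q P)
  have pos: "(\<Prod>p\<in>P. p^e p) > 0" using insert by (auto intro!: prod_pos simp: prime_gt_0_nat)
  have qpos: "q^e q > 0" using insert by (simp add: prime_gt_0_nat)
  have "coprime (q^e q) (\<Prod>p\<in>P. p^e p)"
  proof (rule prod_coprime_right)
    fix p assume "p \<in> P"
    then have "p \<noteq> q" "prime p" "prime q" using insert by auto
    then have "coprime q p" by (simp add: primes_coprime)
    then show "coprime (q^e q) (p^e p)" by simp
  qed
  then show ?case using insert Phi_mult[OF qpos pos] by simp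
qed


lemma pp_val:
  fixes p e :: nat
  assumes pr: "prime p" and e: "e \<ge> 1"
  shows "real (Phi (p^e)) = (if p = 2 \<and> e \<ge> 2 then 2 else 1) * (real p ^ e * (1 - real_of_int (beta p) / real p))"
proof (cases "p = 2")
  case True
  have b: "beta p = 0" using True by (simp add: beta_def)
  show ?thesis
  proof (cases "e \<ge> 2")
    case True
    then show ?thesis using pow2_val[OF True] b \<open>p = 2\<close> by simp
  next
    case False
    then have "e = 1" using e by simp
    then show ?thesis using Phi2 b \<open>p = 2\<close> by simp
  qed
next
  case False
  then show ?thesis using odd_pow_val[OF pr False e] by simp
qed

theorem mainTheorem3:
  fixes n :: nat
  assumes "n > 0"
  shows "real (Phi n) =
    (if 4 dvd n
     then 2 * real n * (\<Prod>p\<in>prime_factors n. (1 - real_of_int (beta p) / real p))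
     else real n * (\<Prod>p\<in>prime_factors n. (1 - real_of_int (beta p) / real p)))"
proof -
  let ?P = "prime_factors n"
  let ?e = "\<lambda>p. multiplicity p n"
  let ?c = "\<lambda>p::nat. (if p = 2 \<and> ?e p \<ge> 2 then 2 else 1 :: real)"
  have fin: "finite ?P" by simp
  have pr: "\<forall>p\<in>?P. prime p" by auto
  have nfac: "n = (\<Prod>p\<in>?P. p ^ ?e p)" using prime_factorization_nat[OF assms] .
  have "real (Phi n) = real (\<Prod>p\<in>?P. Phi (p ^ ?e p))"
    using Phi_prod[of ?P ?e, OF fin pr] nfac by simp
  also have "\<dots> = (\<Prod>p\<in>?P. ?c p * (real p ^ ?e p * (1 - real_of_int (beta p) / real p)))"
    unfolding of_nat_prod
  proof (rule prod.cong[OF refl])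
    fix p assume p: "p \<in> ?P"
    then have "?e p \<ge> 1" using prime_factors_multiplicity[of n] by auto
    then show "real (Phi (p ^ ?e p)) = ?c p * (real p ^ ?e p * (1 - real_of_int (beta p) / real p))"
    proof -
      have "prime p" using p by auto
      from pp_val[OF this \<open>?e p \<ge> 1\<close>] show ?thesis by simp
    qed
  qed
  also have "\<dots> = (\<Prod>p\<in>?P. ?c p) * ((\<Prod>p\<in>?P. real p ^ ?e p) * (\<Prod>p\<in>?P. (1 - real_of_int (beta p) / real p)))"
    by (simp add: prod.distrib)
  also have "(\<Prod>p\<in>?P. real p ^ ?e p) = real n"
    by (subst (2) nfac) (simp add: of_nat_prod)
  also have "(\<Prod>p\<in>?P. ?c p) = (if 4 dvd n then 2 else 1)"
  proof -
    have "(\<Prod>p\<in>?P. ?c p) = (\<Prod>p\<in>?P. if p = 2 then (if ?e 2 \<ge> 2 then 2 else 1) else 1)"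
      by (rule prod.cong) auto
    also have "\<dots> = (if 2 \<in> ?P then (if ?e 2 \<ge> 2 then 2 else 1) else 1)"
      by (rule prod.delta[OF fin])
    also have "\<dots> = (if 4 dvd n then 2 else 1)"
    proof -
      have "4 dvd n \<longleftrightarrow> 2^2 dvd n" by simp
      also have "\<dots> \<longleftrightarrow> 2 \<le> ?e 2" using assms by (intro power_dvd_iff_le_multiplicity) auto
      finally have d: "4 dvd n \<longleftrightarrow> 2 \<le> ?e 2" .
      have "2 \<le> ?e 2 \<Longrightarrow> 2 \<in> ?P" using prime_factors_multiplicity[of n] by auto
      then show ?thesis using d by auto
    qed
    finally show ?thesis .
  qed
  finally show ?thesis by simp
qed

end
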